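(* Let $K$ be a non-zero real constant. Let $J\subset(0,\infty)$ be an open interval and $u:J\to\mathbb{R}$ a smooth function with $u'(\alpha)\neq0$ on $J$. The rotational surface in $(\mathbb{R}^3,\|\cdot\|)$ given by $\bar f(\alpha,v)=(\alpha\cos v,\ \alpha\sin v,\ u(\alpha))$ has constant Minkowski Gaussian curvature $K$ if and only if there are a constant $c_1$ and a fixed sign such that $0<K\alpha^2+c_1<1$ for all $\alpha\in J$ and $$u'(\alpha)=\pm\frac{(K\alpha^2+c_1)^{\frac{2m-1}{2}}}{\left\{1-(K\alpha^2+c_1)^m\right\}^{\frac{2m-1}{2m}}}\qquad(\alpha\in J),$$ i.e. $u(\alpha)=\pm\int\frac{(K\alpha^2+c_1)^{\frac{2m-1}{2}}}{\{1-(K\alpha^2+c_1)^m\}^{\frac{2m-1}{2m}}}\,d\alpha$.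
   Context: Fix an integer $m\ge 2$. Let $\Phi(x_1,x_2,x_3)=(x_1^2+x_2^2)^m+x_3^{2m}$ and let $\|\cdot\|$ be the norm on $\mathbb{R}^3$ whose unit sphere is $S=\{x\in\mathbb{R}^3:\Phi(x)=1\}$ (a smooth, strictly convex surface). For a surface given by a parametrization $f(s,v)$, its Birkhoff–Gauss map $\eta$ is the map into $S$ defined by requiring $\eta\in S$ and $\nabla\Phi(\eta)=\mu\, f_s\times f_v$ for some function $\mu>0$, where $\times$ is the standard cross product (so the tangent plane of $S$ at $\eta(p)$ is parallel to $T_pM$, and $d\eta_p$ is an endomorphism of $T_pM$). The Minkowski Gaussian curvature is $K=\det(d\eta_p)$ (it does not depend on the choice of orientation). *)

theory Defs
  imports "HOL-Analysis.Analysis"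
begin

definition smooth_real_on :: "real set \<Rightarrow> (real \<Rightarrow> real) \<Rightarrow> bool" where
  "smooth_real_on J u \<longleftrightarrow> (\<forall>n. \<forall>x\<in>J. ((deriv ^^ n) u) differentiable (at x))"

text \<open>The gauge function Phi whose level set Phi = 1 is the unit sphere of the norm.\<close>
definition Phi :: "nat \<Rightarrow> real^3 \<Rightarrow> real" where
  "Phi m x = ((x$1)^2 + (x$2)^2)^m + (x$3)^(2*m)"

definition d_s :: "(real \<times> real \<Rightarrow> real^3) \<Rightarrow> real \<times> real \<Rightarrow> real^3" where
  "d_s f p = frechet_derivative f (at p) (1, 0)"

definition d_v :: "(real \<times> real \<Rightarrow> real^3) \<Rightarrow> real \<times> real \<Rightarrow> real^3" where
  "d_v f p = frechet_derivative f (at p) (0, 1)"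

definition BG_map :: "nat \<Rightarrow> (real \<times> real \<Rightarrow> real^3) \<Rightarrow> real \<times> real \<Rightarrow> real^3" where
  "BG_map m f p = (THE y. Phi m y = 1 \<and>
      (\<exists>\<mu>>0. (Phi m has_derivative (\<lambda>h. (\<mu> *\<^sub>R cross3 (d_s f p) (d_v f p)) \<bullet> h)) (at y)))"

definition mink_gauss_curv_at :: "nat \<Rightarrow> (real \<times> real \<Rightarrow> real^3) \<Rightarrow> real \<times> real \<Rightarrow> real \<Rightarrow> bool" where
  "mink_gauss_curv_at m f p k \<longleftrightarrow>
     f differentiable (at p) \<and> BG_map m f differentiable (at p) \<and>
     (\<exists>a b c d. d_s (BG_map m f) p = a *\<^sub>R d_s f p + c *\<^sub>R d_v f p \<and>
                d_v (BG_map m f) p = b *\<^sub>R d_s f p + d *\<^sub>R d_v f p \<and>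
                k = a * d - b * c)"

definition const_mink_gauss_curv :: "nat \<Rightarrow> (real \<times> real \<Rightarrow> real^3) \<Rightarrow> (real \<times> real) set \<Rightarrow> real \<Rightarrow> bool" where
  "const_mink_gauss_curv m f U k \<longleftrightarrow> (\<forall>p\<in>U. mink_gauss_curv_at m f p k)"

definition rot_surface :: "(real \<Rightarrow> real) \<Rightarrow> real \<times> real \<Rightarrow> real^3" where
  "rot_surface u p = vector [fst p * cos (snd p), fst p * sin (snd p), u (fst p)]"

end

theory Submission
  imports Defs
begin


lemma vec3_eq: "(x::real^3) = y \<longleftrightarrow> x$1 = y$1 \<and> x$2 = y$2 \<and> x$3 = y$3"
  by (simp add: vec_eq_iff forall_3)

lemma vector3_axis: "(vector[a,b,c]::real^3) = a *\<^sub>R axis 1 1 + b *\<^sub>R axis 2 1 + c *\<^sub>R axis 3 1"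
  by (simp add: vec3_eq axis_def)

lemma has_derivative_vector3:
  assumes "(f1 has_derivative f1') F" "(f2 has_derivative f2') F" "(f3 has_derivative f3') F"
  shows "((\<lambda>x. vector[f1 x, f2 x, f3 x] :: real^3) has_derivative (\<lambda>h. vector[f1' h, f2' h, f3' h])) F"
  unfolding vector3_axis
  by (intro has_derivative_add has_derivative_scaleR_left assms)

definition gradPhi :: "nat \<Rightarrow> real^3 \<Rightarrow> real^3" where
  "gradPhi m y = vector[2*m*((y$1)^2+(y$2)^2)^(m-1) * y$1, 2*m*((y$1)^2+(y$2)^2)^(m-1) * y$2, 2*m*(y$3)^(2*m-1)]"

lemma Phi_deriv:
  assumes "m \<ge> 1"
  shows "(Phi m has_derivative (\<lambda>h. gradPhi m y \<bullet> h)) (at y)"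
proof -
  have "(Phi m has_derivative (\<lambda>h. real m * ((y$1)^2+(y$2)^2)^(m-1) * (2*y$1*h$1 + 2*y$2*h$2)
        + real (2*m) * (y$3)^(2*m-1) * h$3)) (at y)"
    unfolding Phi_def
    by (auto intro!: derivative_eq_intros bounded_linear.has_derivative[OF bounded_linear_vec_nth] simp: algebra_simps)
  moreover have "(\<lambda>h. real m * ((y$1)^2+(y$2)^2)^(m-1) * (2*y$1*h$1 + 2*y$2*h$2)
        + real (2*m) * (y$3)^(2*m-1) * h$3) = (\<lambda>h. gradPhi m y \<bullet> h)"
    by (auto simp: gradPhi_def inner_vec_def sum_3 algebra_simps)
  ultimately show ?thesis by simp
qed



lemma rot_deriv:
  assumes "(u has_real_derivative u') (at a)"
  shows "(rot_surface u has_derivative (\<lambda>h. vector[fst h * cos v - snd h * (a * sin v),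
       fst h * sin v + snd h * (a * cos v), u' * fst h])) (at (a,v))"
proof -
  have u: "((\<lambda>x. u (fst x)) has_derivative (\<lambda>h. u' * fst h)) (at (a,v))"
  proof -
    have 1: "(fst has_derivative fst) (at (a,v))" by (rule bounded_linear_imp_has_derivative[OF bounded_linear_fst])
    have 2: "(u has_derivative (*) u') (at (fst (a,v)))" using assms by (simp add: has_field_derivative_def)
    show ?thesis using has_derivative_compose[OF 1 2] by simp
  qed
  show ?thesis
    unfolding rot_surface_def[abs_def]
    by (intro has_derivative_vector3 u) (auto intro!: derivative_eq_intros simp: algebra_simps)
qed

lemma rot_ds:
  assumes "(u has_real_derivative u') (at a)"
  shows "d_s (rot_surface u) (a,v) = vector[cos v, sin v, u']"
    and "d_v (rot_surface u) (a,v) = vector[- a * sin v, a * cos v, 0]"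
    and "rot_surface u differentiable (at (a,v))"
  using frechet_derivative_at[OF rot_deriv[OF assms, of v], symmetric] rot_deriv[OF assms, of v]
  by (auto simp: d_s_def d_v_def differentiable_def)

lemma cross_rot: "cross3 (vector[cos v, sin v, u']) (vector[- a * sin v, a * cos v, 0])
   = vector[- a * u' * cos v, - a * u' * sin v, a]"
  by (simp add: cross3_def vec3_eq algebra_simps flip: distrib_left)



lemma sq_pow: "((x::real)^2)^k = x^(2*k)"
  by (simp add: power_mult)

lemma bg_unique_alg:
  fixes y1 y2 y3 w U z A cc ss :: real
  assumes w: "w>0" and z: "z>0" and A: "A>0" and zA: "z^(2*n+2)*(1+A^(2*n+2)) = 1"
    and AU: "A^(2*n+1) = abs U"
    and cs: "cc^2 + ss^2 = 1"
    and Ph: "(y1^2+y2^2)^(n+1) + y3^(2*n+2) = 1"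
    and e1: "(y1^2+y2^2)^n * y1 = - w*U* cc" and e2: "(y1^2+y2^2)^n * y2 = - w*U* ss"
    and e3: "y3^(2*n+1) = w"
  shows "y3 = z \<and> y1 = - sgn U * (z*A* cc) \<and> y2 = - sgn U * (z*A* ss)"
proof -
  define R where "R = y1^2+y2^2"
  have R0: "R \<ge> 0" unfolding R_def by simp
  have y3pos: "y3 > 0"
  proof (rule ccontr)
    assume "\<not> y3 > 0"
    hence "y3 \<le> 0" by simp
    have "y3^(2*n+1) = y3 * (y3^n)^2" by (simp add: power_mult power_add mult.commute power2_eq_square flip: power_mult_distrib power_add) 
    also have "\<dots> \<le> 0" using \<open>y3 \<le> 0\<close> by (simp add: mult_nonpos_nonneg)
    finally show False using e3 w by simp
  qed
  have a1: "R^(2*n+1) = (R^n)^2 * R"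
    by (simp add: power_add power_mult mult.commute flip: power_mult)
  have a2: "(R^n)^2 * R = (R^n*y1)^2 + (R^n*y2)^2"
    unfolding R_def by (simp add: power_mult_distrib algebra_simps)
  have a3: "(R^n*y1)^2 + (R^n*y2)^2 = (w*U)^2"
    using e1 e2 cs unfolding R_def[symmetric]
    by (simp add: power_mult_distrib flip: distrib_left)
  have a4: "(w*U)^2 = (y3^2*A^2)^(2*n+1)"
  proof -
    have "(y3^2*A^2)^(2*n+1) = (y3^(2*n+1))^2 * (A^(2*n+1))^2"
      by (simp add: power_mult_distrib flip: power_mult)
    also have "\<dots> = (w*U)^2" using e3 AU by (simp add: power_mult_distrib)
    finally show ?thesis by simp
  qed
  have "R^(2*n+1) = (y3^2*A^2)^(2*n+1)" using a1 a2 a3 a4 by simp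
  hence "R = y3^2*A^2"
    using power_eq_iff_eq_base[of "2*n+1" R "y3^2*A^2"] R0 by simp
  hence "R^(n+1) = y3^(2*(n+1))*A^(2*(n+1))"
    by (simp add: power_mult_distrib power2_eq_square flip: sq_pow)
  hence "1 = y3^(2*n+2) * (1+A^(2*n+2))"
    using Ph unfolding R_def[symmetric]
    by (simp add: algebra_simps)
  hence "y3^(2*n+2) = z^(2*n+2)" using zA
    by (metis add_pos_pos mult_right_cancel A zero_less_one zero_less_power less_irrefl)
  hence y3z: "y3 = z" using power_eq_iff_eq_base[of "2*n+2" y3 z] y3pos z by simp
  have RzA: "R = (z*A)^2" using \<open>R = y3^2*A^2\<close> y3z by (simp add: power_mult_distrib)
  have Rn: "R^n = (z*A)^(2*n)" using RzA by (simp add: power_mult)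
  have U: "U = sgn U * A^(2*n+1)" using AU by (simp add: sgn_mult_abs)
  have wz: "w = z^(2*n+1)" using e3 y3z by simp
  have pos: "(z*A)^(2*n) > 0" using z A by simp
  have "(z*A)^(2*n) * y1 = (z*A)^(2*n) * (- sgn U * (z*A* cc))"
    using e1 unfolding R_def[symmetric] Rn wz
    by (subst (asm) U) (simp add: power_mult_distrib algebra_simps)
  hence 1: "y1 = - sgn U * (z*A* cc)" using pos by (metis mult_minus_right mult_cancel_left less_irrefl)
  have "(z*A)^(2*n) * y2 = (z*A)^(2*n) * (- sgn U * (z*A* ss))"
    using e2 unfolding R_def[symmetric] Rn wz
    by (subst (asm) U) (simp add: power_mult_distrib algebra_simps)
  hence 2: "y2 = - sgn U * (z*A* ss)" using pos by (metis mult_minus_right mult_cancel_left less_irrefl)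
  show ?thesis using 1 2 y3z by simp
qed

lemma grad_eq_from_deriv:
  assumes "(Phi m has_derivative (\<lambda>h. (g::real^3) \<bullet> h)) (at y)" "m \<ge> 1"
  shows "gradPhi m y = g"
proof -
  have "(\<lambda>h. gradPhi m y \<bullet> h) = (\<lambda>h. g \<bullet> h)"
    using has_derivative_unique[OF Phi_deriv[OF assms(2)] assms(1)] .
  hence "\<And>i. gradPhi m y \<bullet> axis i 1 = g \<bullet> axis i 1" by metis
  hence "\<And>i. gradPhi m y $ i = g $ i" by (simp add: inner_axis)
  thus ?thesis by (simp add: vec_eq_iff)
qed

lemma BG_formula:
  assumes m: "m = Suc n" and a: "a > 0" and u: "(u has_real_derivative U) (at a)" and U: "U \<noteq> 0"
    and z: "z>0" and A: "A>0" and zA: "z^(2*n+2)*(1+A^(2*n+2)) = 1" and AU: "A^(2*n+1) = abs U"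
  shows "BG_map m (rot_surface u) (a,v) = vector[- sgn U * (z*A* cos v), - sgn U * (z*A* sin v), z]"
proof -
  define N where "N = (vector[- a * U * cos v, - a * U * sin v, a] :: real^3)"
  have N: "cross3 (d_s (rot_surface u) (a,v)) (d_v (rot_surface u) (a,v)) = N"
    unfolding N_def rot_ds[OF u] cross_rot by simp
  define y0 where "y0 = (vector[- sgn U * (z*A* cos v), - sgn U * (z*A* sin v), z] :: real^3)"
  have m1: "m \<ge> 1" using m by simp
  have R0: "(y0$1)^2 + (y0$2)^2 = (z*A)^2"
  proof -
    have "(y0$1)^2 + (y0$2)^2 = (z*A)^2*(cos v)^2 + (z*A)^2*(sin v)^2"
      using U unfolding y0_def by (simp add: power_mult_distrib sgn_if)
    also have "\<dots> = (z*A)^2" by (simp flip: distrib_left)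
    finally show ?thesis .
  qed
  have Ph0: "Phi m y0 = 1"
  proof -
    have "Phi m y0 = ((z*A)^2)^(n+1) + z^(2*(n+1))" unfolding Phi_def R0 m by (simp add: y0_def)
    also have "\<dots> = z^(2*n+2)*(1+A^(2*n+2))"
    proof -
      have e: "2*(n+1) = 2*n+2" by simp
      show ?thesis unfolding sq_pow e by (simp add: power_mult_distrib ring_distribs mult.commute)
    qed
    finally show ?thesis using zA by simp
  qed
  define \<mu> where "\<mu> = 2 * real m * z^(2*n+1) / a"
  have mu: "\<mu> > 0" unfolding \<mu>_def using a z m by simp
  have U': "U = sgn U * A^(2*n+1)" using AU by (simp add: sgn_mult_abs)
  have g0: "gradPhi m y0 = \<mu> *\<^sub>R N"
  proof -
    have "((y0$1)^2 + (y0$2)^2)^(m-1) = (z*A)^(2*n)" unfolding R0 m by (simp add: power_mult)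
    moreover have "2*m - 1 = 2*n+1" using m by simp
    ultimately show ?thesis
      unfolding gradPhi_def N_def \<mu>_def vec3_eq using a
      by (simp add: y0_def) (subst (1 2) U'; simp add: power_mult_distrib algebra_simps)
  qed
  show ?thesis
    unfolding BG_map_def N y0_def[symmetric]
  proof (rule the_equality)
    show "Phi m y0 = 1 \<and> (\<exists>\<mu>>0. (Phi m has_derivative (\<lambda>h. (\<mu> *\<^sub>R N) \<bullet> h)) (at y0))"
      using Ph0 mu Phi_deriv[OF m1, of y0] g0 by auto
  next
    fix y assume H: "Phi m y = 1 \<and> (\<exists>\<mu>>0. (Phi m has_derivative (\<lambda>h. (\<mu> *\<^sub>R N) \<bullet> h)) (at y))"
    then obtain \<nu> where nu: "\<nu> > 0" and d: "(Phi m has_derivative (\<lambda>h. (\<nu> *\<^sub>R N) \<bullet> h)) (at y)" by auto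
    have g: "gradPhi m y = \<nu> *\<^sub>R N" using grad_eq_from_deriv[OF d m1] .
    define w where "w = \<nu> * a / (2 * real m)"
    have w: "w > 0" using nu a m unfolding w_def by simp
    have mm: "m - 1 = n" "2*m - 1 = 2*n+1" "2*m = 2*n+2" using m by auto
    have e: "2 * real m * ((y$1)^2+(y$2)^2)^n * y$1 = \<nu> * (- a * U * cos v)"
            "2 * real m * ((y$1)^2+(y$2)^2)^n * y$2 = \<nu> * (- a * U * sin v)"
            "2 * real m * (y$3)^(2*n+1) = \<nu> * a"
      using g unfolding gradPhi_def N_def vec3_eq mm by auto
    have mpos: "2 * real m > 0" using m by simp
    have e1: "((y$1)^2+(y$2)^2)^n * y$1 = - w * U * cos v"
      using e(1) mpos unfolding w_def by (simp add: field_simps)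
    have e2: "((y$1)^2+(y$2)^2)^n * y$2 = - w * U * sin v"
      using e(2) mpos unfolding w_def by (simp add: field_simps)
    have e3: "(y$3)^(2*n+1) = w"
      using e(3) mpos unfolding w_def by (simp add: field_simps)
    have Ph: "((y$1)^2+(y$2)^2)^(n+1) + (y$3)^(2*n+2) = 1"
      using H unfolding Phi_def m by simp
    from bg_unique_alg[OF w z A zA AU sin_cos_squared_add2 Ph e1 e2 e3]
    show "y = y0"
      by (simp add: vec3_eq y0_def)
  qed
qed



lemma zA_exists:
  assumes "U \<noteq> (0::real)"
  shows "\<exists>z A. z>0 \<and> A>0 \<and> z^(2*n+2)*(1+A^(2*n+2)) = 1 \<and> A^(2*n+1) = abs U"
proof -
  define A where "A = root (2*n+1) (abs U)"
  have A: "A > 0" unfolding A_def using assms by simp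
  have AU: "A^(2*n+1) = abs U" unfolding A_def by (rule real_root_pow_pos2) auto
  define z where "z = 1 / root (2*n+2) (1 + A^(2*n+2))"
  have Ap: "1 + A^(2*n+2) > 0" using A by (simp add: add_pos_pos)
  have z: "z > 0" unfolding z_def using Ap by simp
  have r: "root (2*n+2) (1 + A^(2*n+2)) ^ (2*n+2) = 1 + A^(2*n+2)"
    by (rule real_root_pow_pos2) (use Ap in auto)
  have "z^(2*n+2) = 1 / (1 + A^(2*n+2))" unfolding z_def power_divide r by simp
  hence "z^(2*n+2)*(1+A^(2*n+2)) = 1" using Ap by simp
  thus ?thesis using A AU z by blast
qed

lemma pow_powr: "(x::real) > 0 \<Longrightarrow> k > 0 \<Longrightarrow> (x^k) powr (real j / real k) = x^j"
  by (simp add: powr_realpow[symmetric] powr_powr)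

lemma partial_derivs:
  assumes "(F has_derivative D) (at (a,b))"
  shows "((\<lambda>x. F (x,b) $ i) has_real_derivative (D (1,0) $ i)) (at a)"
    and "((\<lambda>t. F (a,t) $ i) has_real_derivative (D (0,1) $ i)) (at b)"
proof -
  have lin: "linear D" using assms has_derivative_linear by blast
  have p1: "((\<lambda>x. (x,b)) has_derivative (\<lambda>h. (h,0))) (at a)"
    by (auto intro!: derivative_eq_intros)
  have p2: "((\<lambda>t. (a,t)) has_derivative (\<lambda>h. (0,h))) (at b)"
    by (auto intro!: derivative_eq_intros)
  have c1: "((\<lambda>x. F (x,b)) has_derivative (\<lambda>h. D (h,0))) (at a)"
    using has_derivative_compose[OF p1, of F D] assms by simp
  have c2: "((\<lambda>t. F (a,t)) has_derivative (\<lambda>h. D (0,h))) (at b)"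
    using has_derivative_compose[OF p2, of F D] assms by simp
  have d1: "((\<lambda>x. F (x,b) $ i) has_derivative (\<lambda>h. D (h,0) $ i)) (at a)"
    using bounded_linear.has_derivative[OF bounded_linear_vec_nth c1] .
  have d2: "((\<lambda>t. F (a,t) $ i) has_derivative (\<lambda>h. D (0,h) $ i)) (at b)"
    using bounded_linear.has_derivative[OF bounded_linear_vec_nth c2] .
  have e1: "(\<lambda>h. D (h,0) $ i) = (*) (D (1,0) $ i)"
  proof
    fix h :: real
    have "D (h,0) = D (h *\<^sub>R (1,0))" by simp
    also have "\<dots> = h *\<^sub>R D (1,0)" by (rule linear_cmul[OF lin])
    finally show "D (h,0) $ i = D (1,0) $ i * h" by simp
  qed
  have e2: "(\<lambda>h. D (0,h) $ i) = (*) (D (0,1) $ i)"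
  proof
    fix h :: real
    have "D (0,h) = D (h *\<^sub>R (0,1))" by simp
    also have "\<dots> = h *\<^sub>R D (0,1)" by (rule linear_cmul[OF lin])
    finally show "D (0,h) $ i = D (0,1) $ i * h" by simp
  qed
  show "((\<lambda>x. F (x,b) $ i) has_real_derivative (D (1,0) $ i)) (at a)"
    using d1 unfolding e1 has_field_derivative_def .
  show "((\<lambda>t. F (a,t) $ i) has_real_derivative (D (0,1) $ i)) (at b)"
    using d2 unfolding e2 has_field_derivative_def .
qed

lemma sign_const_le:
  fixes f :: "real \<Rightarrow> real"
  assumes J: "is_interval J" and c: "\<forall>x\<in>J. isCont f x" and nz: "\<forall>x\<in>J. f x \<noteq> 0"
    and a: "a \<in> J" and b: "b \<in> J" and ab: "a \<le> b"
  shows "sgn (f a) = sgn (f b)"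
proof -
  have sub: "{a..b} \<subseteq> J" using mem_is_interval_1_I[OF J a b] by auto
  have co: "continuous_on {a..b} f"
  proof (intro continuous_at_imp_continuous_on ballI)
    fix x assume "x \<in> {a..b}"
    hence "x \<in> J" using sub by blast
    thus "isCont f x" using c by blast
  qed
  have fa: "f a \<noteq> 0" "f b \<noteq> 0" using nz a b by auto
  have n1: "\<not> (f a < 0 \<and> 0 < f b)"
  proof
    assume "f a < 0 \<and> 0 < f b"
    then obtain x where x: "a \<le> x" "x \<le> b" "f x = 0"
      using IVT'[of f a 0 b, OF _ _ ab co] by auto
    have "x \<in> J" using sub x(1,2) by auto
    thus False using nz x(3) by auto
  qed
  have n2: "\<not> (f b < 0 \<and> 0 < f a)"
  proof
    assume "f b < 0 \<and> 0 < f a"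
    then obtain x where x: "a \<le> x" "x \<le> b" "f x = 0"
      using IVT2'[of f b 0 a, OF _ _ ab co] by auto
    have "x \<in> J" using sub x(1,2) by auto
    thus False using nz x(3) by auto
  qed
  show ?thesis
  proof (cases "f a > 0")
    case True
    hence "f b > 0" using n2 fa by linarith
    thus ?thesis using True by simp
  next
    case False
    hence "f a < 0" using fa by linarith
    hence "f b < 0" using n1 fa by linarith
    thus ?thesis using \<open>f a < 0\<close> by simp
  qed
qed

lemma sign_const:
  fixes f :: "real \<Rightarrow> real"
  assumes J: "is_interval J" and c: "\<forall>x\<in>J. isCont f x" and nz: "\<forall>x\<in>J. f x \<noteq> 0"
    and a: "a \<in> J" and b: "b \<in> J"
  shows "sgn (f a) = sgn (f b)"
proof (cases "a \<le> b")
  case True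
  then show ?thesis using sign_const_le[OF J c nz a b] by blast
next
  case False
  hence "b \<le> a" by simp
  then show ?thesis using sign_const_le[OF J c nz b a] by simp
qed




lemma forward:
  assumes m: "m = Suc n" and J: "open J" "is_interval J" "J \<noteq> {}" "J \<subseteq> {0<..}"
    and ud: "\<forall>a\<in>J. (u has_real_derivative (deriv u a)) (at a)"
    and unz: "\<forall>a\<in>J. deriv u a \<noteq> 0"
    and uc: "\<forall>a\<in>J. isCont (deriv u) a"
    and C: "const_mink_gauss_curv m (rot_surface u) (J \<times> UNIV) K"
  shows "\<exists>c1::real. \<exists>\<sigma>\<in>{-1, 1::real}. \<forall>\<alpha>\<in>J.
        0 < K * \<alpha>^2 + c1 \<and> K * \<alpha>^2 + c1 < 1 \<and>
        deriv u \<alpha> = \<sigma> * (K * \<alpha>^2 + c1) powr ((2 * real m - 1) / 2)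
                     / (1 - (K * \<alpha>^2 + c1) ^ m) powr ((2 * real m - 1) / (2 * real m))"
proof -
  define B where "B = BG_map m (rot_surface u)"
  define g where "g x = B (x,0) $ 1" for x
  have loc: "\<exists>z A. z>0 \<and> A>0 \<and> z^(2*n+2)*(1+A^(2*n+2)) = 1 \<and> A^(2*n+1) = abs (deriv u a) \<and>
        (\<forall>t. B (a,t) = vector[- sgn (deriv u a) * (z*A* cos t), - sgn (deriv u a) * (z*A* sin t), z])"
    if a: "a \<in> J" for a
  proof -
    obtain z A where zA: "z>0" "A>0" "z^(2*n+2)*(1+A^(2*n+2)) = 1" "A^(2*n+1) = abs (deriv u a)"
      using zA_exists[of "deriv u a" n] unz a by blast
    have "a > 0" using a J by auto
    have "\<forall>t. B (a,t) = vector[- sgn (deriv u a) * (z*A* cos t), - sgn (deriv u a) * (z*A* sin t), z]"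
      using BG_formula[OF m \<open>a>0\<close> ud[rule_format, OF a] unz[rule_format, OF a] zA] unfolding B_def
      by simp
    with zA show ?thesis by (intro exI[of _ z] exI[of _ A]) simp
  qed
  have der: "((\<lambda>x. (g x)^2 - K * x^2) has_real_derivative 0) (at a)" if a: "a \<in> J" for a
  proof -
    obtain z A where zA: "z>0" "A>0" "z^(2*n+2)*(1+A^(2*n+2)) = 1" "A^(2*n+1) = abs (deriv u a)"
      and Bt: "\<And>t. B (a,t) = vector[- sgn (deriv u a) * (z*A* cos t), - sgn (deriv u a) * (z*A* sin t), z]"
      using loc[OF a] by blast
    have apos: "a > 0" using a J by auto
    have mk: "mink_gauss_curv_at m (rot_surface u) (a,0) K" using C a unfolding const_mink_gauss_curv_def by auto
    then obtain ac bc cc dc where dif: "B differentiable (at (a,0))"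
      and h1: "d_s B (a,0) = ac *\<^sub>R d_s (rot_surface u) (a,0) + cc *\<^sub>R d_v (rot_surface u) (a,0)"
      and h2: "d_v B (a,0) = bc *\<^sub>R d_s (rot_surface u) (a,0) + dc *\<^sub>R d_v (rot_surface u) (a,0)"
      and K: "K = ac * dc - bc * cc"
      unfolding mink_gauss_curv_at_def B_def by blast
    define D where "D = frechet_derivative B (at (a,0))"
    have BD: "(B has_derivative D) (at (a,0))" using dif frechet_derivative_works unfolding D_def by blast
    have rs: "d_s (rot_surface u) (a,0) = vector[1, 0, deriv u a]"
             "d_v (rot_surface u) (a,0) = vector[0, a, 0]"
      using rot_ds[OF ud[rule_format, OF a], of 0] by auto
    have D1: "D (1,0) = ac *\<^sub>R vector[1, 0, deriv u a] + cc *\<^sub>R vector[0, a, 0]"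
      using h1 unfolding d_s_def[of B] D_def[symmetric] rs by simp
    have D2: "D (0,1) = bc *\<^sub>R vector[1, 0, deriv u a] + dc *\<^sub>R vector[0, a, 0]"
      using h2 unfolding d_v_def[of B] D_def[symmetric] rs by simp
    have gd: "(g has_real_derivative ac) (at a)"
      using partial_derivs(1)[OF BD, of 1] D1 unfolding g_def by simp
    have t1: "((\<lambda>t. B (a,t) $ 1) has_real_derivative bc) (at 0)"
      using partial_derivs(2)[OF BD, of 1] D2 by simp
    have t2: "((\<lambda>t. B (a,t) $ 2) has_real_derivative dc * a) (at 0)"
      using partial_derivs(2)[OF BD, of 2] D2 by simp
    have t1': "((\<lambda>t. B (a,t) $ 1) has_real_derivative 0) (at 0)"
      unfolding Bt by (auto intro!: derivative_eq_intros)
    have t2': "((\<lambda>t. B (a,t) $ 2) has_real_derivative - sgn (deriv u a) * (z*A)) (at 0)"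
      unfolding Bt by (auto intro!: derivative_eq_intros)
    have bc: "bc = 0" using DERIV_unique[OF t1 t1'] .
    have dc: "dc * a = - sgn (deriv u a) * (z*A)" using DERIV_unique[OF t2 t2'] .
    have ga: "g a = - sgn (deriv u a) * (z*A)" unfolding g_def Bt by simp
    have gdc: "g a = dc * a" using dc ga by simp
    have "ac * g a = K * a" unfolding gdc K bc by simp
    moreover have "((\<lambda>x. (g x)^2 - K * x^2) has_real_derivative (2 * g a * ac - K * (2 * a))) (at a)"
      using gd by (auto intro!: derivative_eq_intros)
    moreover have "2 * g a * ac - K * (2 * a) = 0" using calculation(1) by (simp add: algebra_simps)
    ultimately show ?thesis by metis
  qed
  have "convex J" using J by (simp add: is_interval_convex)
  then obtain c where c: "\<forall>x\<in>J. (g x)^2 - K * x^2 = c"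
    using has_field_derivative_zero_constant[of J "\<lambda>x. (g x)^2 - K * x^2"] der
    by (metis has_field_derivative_at_within)
  obtain a0 where a0: "a0 \<in> J" using J by auto
  define \<sigma> where "\<sigma> = sgn (deriv u a0)"
  have sig: "\<sigma> \<in> {-1, 1}" using unz a0 unfolding \<sigma>_def by (auto simp: sgn_if)
  have sgn_eq: "sgn (deriv u a) = \<sigma>" if "a \<in> J" for a
    unfolding \<sigma>_def using sign_const[OF J(2) uc unz that a0] .
  have mm: "2 * real m - 1 = real (2*n+1)" "2 * real m = real (2*n+2)" "(2::real) = real 2" using m by auto
  show ?thesis
  proof (rule exI[of _ c], rule bexI[OF _ sig], rule ballI)
    fix a assume a: "a \<in> J"
    obtain z A where zA: "z>0" "A>0" "z^(2*n+2)*(1+A^(2*n+2)) = 1" "A^(2*n+1) = abs (deriv u a)"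
      and Bt: "\<And>t. B (a,t) = vector[- sgn (deriv u a) * (z*A* cos t), - sgn (deriv u a) * (z*A* sin t), z]"
      using loc[OF a] by blast
    have s2: "(sgn (deriv u a))^2 = 1" using unz a by (simp add: sgn_if)
    have "(g a)^2 = (sgn (deriv u a))^2 * (z*A)^2" unfolding g_def Bt by (simp add: power_mult_distrib)
    hence g2: "(g a)^2 = (z*A)^2" unfolding s2 by simp
    have P: "K * a^2 + c = (z*A)^2"
      using c a g2 by force
    have Pm: "(K * a^2 + c)^m = z^(2*n+2) * A^(2*n+2)" unfolding P m sq_pow
      by (simp add: power_mult_distrib)
    have Q: "1 - (K * a^2 + c)^m = z^(2*n+2)" using zA(3) unfolding Pm by (simp add: algebra_simps)
    have G1: "0 < K * a^2 + c" unfolding P using zA by simp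
    have G2: "K * a^2 + c < 1" 
    proof -
      have "z^(2*n+2) > 0" using zA(1) by simp
      hence "(K * a^2 + c)^m < 1" using Q by linarith
      thus ?thesis by (metis not_less one_le_power)
    qed
    have "deriv u a = \<sigma> * A^(2*n+1)" using zA(4) sgn_eq[OF a] by (metis sgn_mult_abs)
    also have "\<dots> = \<sigma> * (z*A)^(2*n+1) / z^(2*n+1)" using zA by (simp add: power_mult_distrib)
    also have "\<dots> = \<sigma> * (K * a^2 + c) powr ((2 * real m - 1) / 2)
                     / (1 - (K * a^2 + c) ^ m) powr ((2 * real m - 1) / (2 * real m))"
    proof -
      have e1: "(2 * real m - 1) / 2 = real (2*n+1) / real (2::nat)" using m by simp
      have e2: "(2 * real m - 1) / (2 * real m) = real (2*n+1) / real (2*n+2)" using m by simp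
      have p1: "(K * a^2 + c) powr ((2 * real m - 1) / 2) = (z*A)^(2*n+1)"
        unfolding P e1 by (rule pow_powr) (use zA in auto)
      have p2: "(1 - (K * a^2 + c) ^ m) powr ((2 * real m - 1) / (2 * real m)) = z^(2*n+1)"
        unfolding Q e2 by (rule pow_powr) (use zA in auto)
      show ?thesis unfolding p1 p2 ..
    qed
    finally show "0 < K * a^2 + c \<and> K * a^2 + c < 1 \<and> deriv u a = \<sigma> * (K * a^2 + c) powr ((2 * real m - 1) / 2)
                     / (1 - (K * a^2 + c) ^ m) powr ((2 * real m - 1) / (2 * real m))" using G1 G2 by simp
  qed
qed



lemma powr_inv_pow: "(Q::real) > 0 \<Longrightarrow> k > 0 \<Longrightarrow> (Q powr (1 / real k))^k = Q"
  by (simp add: powr_realpow[symmetric] powr_powr)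

lemma comp_fst_deriv:
  assumes "(f has_real_derivative f') (at a)"
  shows "((\<lambda>q. f (fst q)) has_derivative (\<lambda>h. f' * fst h)) (at (a,v))"
proof -
  have 1: "(fst has_derivative fst) (at (a,v))" by (rule bounded_linear_imp_has_derivative[OF bounded_linear_fst])
  have 2: "(f has_derivative (*) f') (at (fst (a,v)))" using assms by (simp add: has_field_derivative_def)
  show ?thesis using has_derivative_compose[OF 1 2] by simp
qed

lemma backward:
  assumes m: "m = Suc n" and J: "open J" "J \<subseteq> {0<..}"
    and ud: "\<forall>a\<in>J. (u has_real_derivative (deriv u a)) (at a)"
    and sig: "\<sigma> \<in> {-1, 1::real}"
    and H: "\<forall>\<alpha>\<in>J. 0 < K * \<alpha>^2 + c1 \<and> K * \<alpha>^2 + c1 < 1 \<and>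
        deriv u \<alpha> = \<sigma> * (K * \<alpha>^2 + c1) powr ((2 * real m - 1) / 2)
                     / (1 - (K * \<alpha>^2 + c1) ^ m) powr ((2 * real m - 1) / (2 * real m))"
  shows "const_mink_gauss_curv m (rot_surface u) (J \<times> UNIV) K"
proof -
  define P where "P x = K * x^2 + c1" for x
  define \<rho> where "\<rho> x = sqrt (P x)" for x
  define Z where "Z x = (1 - P x ^ m) powr (1 / real (2*n+2))" for x
  define B where "B = BG_map m (rot_surface u)"
  define E where "E q = (vector[- \<sigma> * (\<rho> (fst q) * cos (snd q)), - \<sigma> * (\<rho> (fst q) * sin (snd q)), Z (fst q)] :: real^3)" for q
  have s2: "\<sigma> * \<sigma> = 1" "sgn \<sigma> = \<sigma>" using sig by auto
  have facts: "\<rho> a > 0 \<and> Z a > 0 \<and> (Z a)^(2*n+2) = 1 - P a ^ m \<and> (\<rho> a)^2 = P a \<and>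
     deriv u a = \<sigma> * (\<rho> a)^(2*n+1) / (Z a)^(2*n+1)" if a: "a \<in> J" for a
  proof -
    have Pa: "0 < P a" "P a < 1" using H a unfolding P_def by auto
    have Qa: "1 - P a ^ m > 0" using power_strict_mono[of "P a" 1 m] Pa m by simp
    have r: "\<rho> a > 0" "(\<rho> a)^2 = P a" unfolding \<rho>_def using Pa by auto
    have z: "Z a > 0" unfolding Z_def using Qa by simp
    have zp: "(Z a)^(2*n+2) = 1 - P a ^ m" unfolding Z_def by (rule powr_inv_pow) (use Qa in auto)
    have e1: "(2 * real m - 1) / 2 = real (2*n+1) / real (2::nat)" using m by simp
    have e2: "(2 * real m - 1) / (2 * real m) = real (2*n+1) / real (2*n+2)" using m by simp
    have p1: "P a powr ((2 * real m - 1) / 2) = (\<rho> a)^(2*n+1)"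
      unfolding r(2)[symmetric] e1 by (rule pow_powr) (use r in auto)
    have p2: "(1 - P a ^ m) powr ((2 * real m - 1) / (2 * real m)) = (Z a)^(2*n+1)"
      unfolding zp[symmetric] e2 by (rule pow_powr) (use z in auto)
    have "deriv u a = \<sigma> * (\<rho> a)^(2*n+1) / (Z a)^(2*n+1)"
      using H a p1 p2 unfolding P_def by auto
    thus ?thesis using r z zp by auto
  qed
  have BE: "B q = E q" if q: "q \<in> J \<times> UNIV" for q
  proof -
    obtain a t where qat: "q = (a,t)" by (cases q)
    have a: "a \<in> J" using q qat by auto
    have apos: "a > 0" using a J by auto
    have f: "\<rho> a > 0" "Z a > 0" "(Z a)^(2*n+2) = 1 - P a ^ m" "(\<rho> a)^2 = P a"
       "deriv u a = \<sigma> * (\<rho> a)^(2*n+1) / (Z a)^(2*n+1)" using facts[OF a] by auto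
    define A where "A = \<rho> a / Z a"
    have A: "A > 0" unfolding A_def using f by simp
    have zA: "Z a * A = \<rho> a" unfolding A_def using f by simp
    have AU: "A^(2*n+1) = abs (deriv u a)" unfolding f(5) A_def power_divide
      using f(1,2) s2 sig by (auto simp: abs_mult)
    have U: "deriv u a \<noteq> 0" using f sig by auto
    have sU: "sgn (deriv u a) = \<sigma>" unfolding f(5) using f(1,2) sig by (auto simp: sgn_mult)
    have Pm: "P a ^ m = (\<rho> a)^(2*n+2)" unfolding f(4)[symmetric] m sq_pow by simp
    have "(Z a)^(2*n+2) * (1 + A^(2*n+2)) = (Z a)^(2*n+2) + (\<rho> a)^(2*n+2)"
      unfolding A_def power_divide using f(2) by (simp add: distrib_left)
    hence zA1: "(Z a)^(2*n+2) * (1 + A^(2*n+2)) = 1" using f(3) Pm by simp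
    show ?thesis
      unfolding qat B_def BG_formula[OF m apos ud[rule_format, OF a] U f(2) A zA1 AU] sU E_def
      by (simp add: zA[symmetric] mult.assoc)
  qed
  show ?thesis
    unfolding const_mink_gauss_curv_def
  proof
    fix q :: "real \<times> real" assume q: "q \<in> J \<times> UNIV"
    obtain a v where qav: "q = (a,v)" by (cases q)
    have a: "a \<in> J" using q qav by auto
    have apos: "a > 0" using a J by auto
    have f: "\<rho> a > 0" "Z a > 0" "(Z a)^(2*n+2) = 1 - P a ^ m" "(\<rho> a)^2 = P a"
       "deriv u a = \<sigma> * (\<rho> a)^(2*n+1) / (Z a)^(2*n+1)" using facts[OF a] by auto
    have Qa: "1 - P a ^ m > 0" using f(2,3) by (metis zero_less_power)
    have Pa: "P a > 0" using f(1,4) by (metis zero_less_power)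
    define \<rho>' where "\<rho>' = K * a / \<rho> a"
    define Z' where "Z' = - K * a * (\<rho> a)^(2*n) / (Z a)^(2*n+1)"
    have drho: "(\<rho> has_real_derivative \<rho>') (at a)"
    proof -
      have d1: "DERIV sqrt (K * a^2 + c1) :> inverse (sqrt (P a)) / 2"
        using DERIV_real_sqrt[of "K * a^2 + c1"] Pa unfolding P_def by simp
      have d2: "((\<lambda>x. K * x^2 + c1) has_real_derivative (K * (2 * a))) (at a)"
        by (auto intro!: derivative_eq_intros)
      have "((\<lambda>x. sqrt (K * x^2 + c1)) has_real_derivative (inverse (sqrt (P a)) / 2 * (K * (2 * a)))) (at a)"
        using DERIV_chain2[where f=sqrt and g="\<lambda>x. K * x^2 + c1", OF d1 d2] .
      moreover have "inverse (sqrt (P a)) / 2 * (K * (2 * a)) = \<rho>'"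
        unfolding \<rho>'_def \<rho>_def by (simp add: field_simps)
      ultimately show ?thesis unfolding \<rho>_def P_def by simp
    qed
    have dZ: "(Z has_real_derivative Z') (at a)"
    proof -
      have d: "((\<lambda>x. (1 - P x ^ m) powr (1 / real (2*n+2))) has_real_derivative
          ((1 - P a ^ m) powr (1 / real (2*n+2))) * (0 * ln (1 - P a ^ m) + (- (real m * P a ^ (m-1) * (K * (2*a)))) * (1 / real (2*n+2)) / (1 - P a ^ m))) (at a)"
        by (rule DERIV_powr) (use Qa in \<open>auto simp: P_def intro!: derivative_eq_intros\<close>)
      have "((1 - P a ^ m) powr (1 / real (2*n+2))) * (0 * ln (1 - P a ^ m) + (- (real m * P a ^ (m-1) * (K * (2*a)))) * (1 / real (2*n+2)) / (1 - P a ^ m))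
         = Z a * ((- (real m * P a ^ (m-1) * (K * (2*a)))) * (1 / real (2*n+2)) / (1 - P a ^ m))"
        unfolding Z_def by simp
      also have "\<dots> = - Z a * K * a * P a ^ n / (1 - P a ^ m)"
      proof -
        have mm: "P a ^ (m-1) = P a ^ n" "real m = real n + 1" "real (2*n+2) = 2 * (real n + 1)" using m by auto
        show ?thesis unfolding mm by (simp add: divide_simps)
      qed
      also have "\<dots> = - Z a * K * a * P a ^ n / (Z a)^(2*n+2)" unfolding f(3) ..
      also have "\<dots> = Z'" unfolding Z'_def f(4)[symmetric] sq_pow using f(2) by (simp add: field_simps)
      finally show ?thesis using d unfolding Z_def by simp
    qed
    define DE where "DE h = (vector[- \<sigma> * (\<rho>' * fst h * cos v - \<rho> a * sin v * snd h),
                  - \<sigma> * (\<rho>' * fst h * sin v + \<rho> a * cos v * snd h), Z' * fst h] :: real^3)" for h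
    have ED: "(E has_derivative DE) (at (a,v))"
      unfolding E_def[abs_def] DE_def[abs_def]
      by (intro has_derivative_vector3) (auto intro!: derivative_eq_intros comp_fst_deriv[OF drho] comp_fst_deriv[OF dZ] simp: algebra_simps)
    have BD: "(B has_derivative DE) (at (a,v))"
      using has_derivative_transform_within_open[OF ED open_Times[OF J(1) open_UNIV], of B] BE a by auto
    have fr: "frechet_derivative B (at (a,v)) = DE" using frechet_derivative_at[OF BD] by simp
    have ud': "(u has_real_derivative deriv u a) (at a)" using ud a by auto
    have Zs: "Z' = - \<sigma> * \<rho>' * deriv u a"
    proof -
      have "- \<sigma> * \<rho>' * deriv u a = - (\<sigma>*\<sigma>) * (K*a/\<rho> a) * (\<rho> a)^(2*n+1) / (Z a)^(2*n+1)"
        unfolding \<rho>'_def f(5) by (simp add: algebra_simps)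
      also have "\<dots> = - K*a*(\<rho> a)^(2*n)/(Z a)^(2*n+1)"
        unfolding s2(1) using f(1) by (simp add: field_simps)
      finally show ?thesis unfolding Z'_def by simp
    qed
    show "mink_gauss_curv_at m (rot_surface u) q K"
      unfolding mink_gauss_curv_at_def qav
    proof (intro conjI exI)
      show "rot_surface u differentiable at (a, v)" using rot_ds(3)[OF ud'] .
      show "BG_map m (rot_surface u) differentiable at (a, v)" using BD B_def differentiable_def by blast
      show "d_s (BG_map m (rot_surface u)) (a, v) = (- \<sigma> * \<rho>') *\<^sub>R d_s (rot_surface u) (a, v) + 0 *\<^sub>R d_v (rot_surface u) (a, v)"
        unfolding B_def[symmetric] d_s_def[of B] fr rot_ds(1,2)[OF ud'] DE_def vec3_eq
        using Zs by simp
      show "d_v (BG_map m (rot_surface u)) (a, v) = 0 *\<^sub>R d_s (rot_surface u) (a, v) + (- \<sigma> * \<rho> a / a) *\<^sub>R d_v (rot_surface u) (a, v)"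
        unfolding B_def[symmetric] d_v_def[of B] fr rot_ds(1,2)[OF ud'] DE_def vec3_eq
        using apos by (simp add: field_simps)
      show "K = (- \<sigma> * \<rho>') * (- \<sigma> * \<rho> a / a) - 0 * 0"
        unfolding \<rho>'_def using apos f(1) s2 by (simp add: field_simps)
    qed
  qed
qed


theorem theorem5p1:
  fixes m :: nat and K :: real and J :: "real set" and u :: "real \<Rightarrow> real"
  assumes "m \<ge> 2"
    and "K \<noteq> 0"
    and "open J" and "is_interval J" and "J \<noteq> {}" and "J \<subseteq> {0<..}"
    and "smooth_real_on J u"
    and "\<forall>\<alpha>\<in>J. deriv u \<alpha> \<noteq> 0"
  shows "const_mink_gauss_curv m (rot_surface u) (J \<times> UNIV) K \<longleftrightarrow>
    (\<exists>c1::real. \<exists>\<sigma>\<in>{-1, 1::real}. \<forall>\<alpha>\<in>J.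
        0 < K * \<alpha>^2 + c1 \<and> K * \<alpha>^2 + c1 < 1 \<and>
        deriv u \<alpha> = \<sigma> * (K * \<alpha>^2 + c1) powr ((2 * real m - 1) / 2)
                     / (1 - (K * \<alpha>^2 + c1) ^ m) powr ((2 * real m - 1) / (2 * real m)))"
proof -
  obtain n where m: "m = Suc n" using assms(1) by (cases m) auto
  have ud: "\<forall>a\<in>J. (u has_real_derivative (deriv u a)) (at a)"
  proof
    fix a assume a: "a \<in> J"
    have "((deriv ^^ 0) u) differentiable (at a)" using assms(7) a unfolding smooth_real_on_def by blast
    thus "(u has_real_derivative (deriv u a)) (at a)" by (simp add: DERIV_deriv_iff_real_differentiable)
  qed
  have uc: "\<forall>a\<in>J. isCont (deriv u) a"
  proof
    fix a assume a: "a \<in> J"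
    have "((deriv ^^ 1) u) differentiable (at a)" using assms(7) a unfolding smooth_real_on_def by blast
    hence "(deriv u) differentiable (at a)" by simp
    thus "isCont (deriv u) a" by (rule differentiable_imp_continuous_within)
  qed
  show ?thesis
  proof
    assume "const_mink_gauss_curv m (rot_surface u) (J \<times> UNIV) K"
    from forward[OF m assms(3,4,5,6) ud assms(8) uc this] show "\<exists>c1::real. \<exists>\<sigma>\<in>{-1, 1::real}. \<forall>\<alpha>\<in>J.
        0 < K * \<alpha>^2 + c1 \<and> K * \<alpha>^2 + c1 < 1 \<and>
        deriv u \<alpha> = \<sigma> * (K * \<alpha>^2 + c1) powr ((2 * real m - 1) / 2)
                     / (1 - (K * \<alpha>^2 + c1) ^ m) powr ((2 * real m - 1) / (2 * real m))" .
  next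
    assume "\<exists>c1::real. \<exists>\<sigma>\<in>{-1, 1::real}. \<forall>\<alpha>\<in>J.
        0 < K * \<alpha>^2 + c1 \<and> K * \<alpha>^2 + c1 < 1 \<and>
        deriv u \<alpha> = \<sigma> * (K * \<alpha>^2 + c1) powr ((2 * real m - 1) / 2)
                     / (1 - (K * \<alpha>^2 + c1) ^ m) powr ((2 * real m - 1) / (2 * real m))"
    then obtain c1 \<sigma> where sig: "\<sigma> \<in> {-1, 1::real}" and H: "\<forall>\<alpha>\<in>J.
        0 < K * \<alpha>^2 + c1 \<and> K * \<alpha>^2 + c1 < 1 \<and>
        deriv u \<alpha> = \<sigma> * (K * \<alpha>^2 + c1) powr ((2 * real m - 1) / 2)
                     / (1 - (K * \<alpha>^2 + c1) ^ m) powr ((2 * real m - 1) / (2 * real m))" by blast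
    show "const_mink_gauss_curv m (rot_surface u) (J \<times> UNIV) K"
      by (rule backward[OF m assms(3,6) ud sig H])
  qed
qed

end
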